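(* For every positive integer $n$, as an identity of rational functions in $x$, $$\sum_{k=1}^n\binom{x}{k}\binom{-x}{k}H_k^{(2)}=-\frac{1}{x^2}+\binom{x-1}{n}\binom{-x-1}{n}\left(\frac{1}{x^2}+H_n^{(2)}\right).$$
   Context: $\binom{x}{k}=x(x-1)\cdots(x-k+1)/k!$ for an indeterminate $x$ and integer $k\ge0$. $H_n^{(2)}=\sum_{j=1}^n j^{-2}$. *)

theory Defs
  imports Complex_Main
begin

definition H2 :: "nat \<Rightarrow> 'a::field_char_0" where
  "H2 n = (\<Sum>j=1..n. 1 / (of_nat j)^2)"

end

theory Submission
  imports Defs
begin

lemma key:
  fixes x :: "'a::field_char_0" and n :: nat
  assumes "x \<noteq> 0"
  shows "(\<Sum>k=1..n. (x gchoose k) * ((-x) gchoose k) * H2 k)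
       = - 1 / x^2 + ((x - 1) gchoose n) * ((-x - 1) gchoose n) * (1 / x^2 + H2 n)"
proof (induction n)
  case 0
  then show ?case using assms by (simp add: H2_def)
next
  case (Suc n)
  define a where "a = (x gchoose n)"
  define b where "b = ((-x) gchoose n)"
  define h where "h = (H2 n :: 'a)"
  have hs: "H2 (Suc n) = h + 1 / (of_nat (Suc n))^2"
    by (simp add: H2_def h_def)
  have a1: "(x gchoose Suc n) = (x - of_nat n) * a / of_nat (Suc n)"
    using gbinomial_mult_1[of x n] unfolding a_def
    by (simp add: field_simps del: of_nat_Suc)
  have b1: "((-x) gchoose Suc n) = (-x - of_nat n) * b / of_nat (Suc n)"
    using gbinomial_mult_1[of "-x" n] unfolding b_def
    by (simp add: field_simps del: of_nat_Suc)
  have c: "\<And>k. ((x - 1) gchoose k) = (x - of_nat k) * (x gchoose k) / x"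
    using gbinomial_absorb_comp[of x] assms by (simp add: field_simps)
  have d: "\<And>k. ((-x - 1) gchoose k) = (-x - of_nat k) * ((-x) gchoose k) / (-x)"
    using gbinomial_absorb_comp[of "-x"] assms by (simp add: field_simps)
  have "(\<Sum>k=1..Suc n. (x gchoose k) * ((-x) gchoose k) * H2 k)
      = - 1 / x^2 + (x - of_nat n) * a / x * ((-x - of_nat n) * b / (-x)) * (1 / x^2 + h)
        + (x - of_nat n) * a / of_nat (Suc n) * ((-x - of_nat n) * b / of_nat (Suc n)) * (h + 1 / (of_nat (Suc n))^2)"
    using Suc.IH by (simp add: c d a1 b1 hs a_def b_def h_def)
  also have "\<dots> = - 1 / x^2 + (x - of_nat (Suc n)) * ((x - of_nat n) * a / of_nat (Suc n)) / x
        * ((-x - of_nat (Suc n)) * ((-x - of_nat n) * b / of_nat (Suc n)) / (-x)) * (1 / x^2 + (h + 1 / (of_nat (Suc n))^2))"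
    using assms by (simp add: field_simps power2_eq_square del: of_nat_Suc)
  also have "\<dots> = - 1 / x^2 + ((x - 1) gchoose Suc n) * ((-x - 1) gchoose Suc n) * (1 / x^2 + H2 (Suc n))"
    by (simp only: c d a1 b1 hs)
  finally show ?case .
qed

theorem lemma2p1:
  fixes x :: "'a::field_char_0" and n :: nat
  assumes "n \<ge> 1" and "x \<noteq> 0"
  shows "(\<Sum>k=1..n. (x gchoose k) * ((-x) gchoose k) * H2 k)
       = - 1 / x^2 + ((x - 1) gchoose n) * ((-x - 1) gchoose n) * (1 / x^2 + H2 n)"
  using key[OF assms(2)] .

end
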